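(* Let $\Omega\subset\mathbb{R}^d$ be a closed $\eta$-prox-regular set for some $\eta>0$. Then the map $\Omega\times\mathbb{R}^d\ni(x,v)\mapsto|P_x(v)|^2$ is lower semicontinuous, and for each fixed $x\in\Omega$ the map $\mathbb{R}^d\ni v\mapsto|P_x(v)|^2$ is convex.
   Context: For closed $S$, $P_S(y)$ is the set of nearest points of $S$ to $y$; the proximal normal cone is $N^P(S,x)=\{v:\exists\alpha>0,\ x\in P_S(x+\alpha v)\}$; $S$ is $\eta$-prox-regular if for every $x\in\partial S$ and $v\in N^P(S,x)$ with $|v|=1$, $B_\eta(x+\eta v)\cap S=\emptyset$ (open ball). The Clarke tangent cone $T(\Omega,x)$ is the set of $v$ such that for all $t_n\searrow0$ and $x_n\in\Omega$ with $x_n\to x$ there exist $v_n\to v$ with $x_n+t_nv_n\in\Omega$; it is a closed convex cone, and $P_x(v)$ denotes the unique nearest point of $T(\Omega,x)$ to $v$. *)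

theory Defs
  imports "HOL-Analysis.Analysis"
begin

definition nearest_points :: "'a::euclidean_space set \<Rightarrow> 'a \<Rightarrow> 'a set" where
  "nearest_points S y = {x \<in> S. \<forall>z \<in> S. dist y x \<le> dist y z}"

definition proximal_normal_cone :: "'a::euclidean_space set \<Rightarrow> 'a \<Rightarrow> 'a set" where
  "proximal_normal_cone S x = {v. \<exists>\<alpha>>0. x \<in> nearest_points S (x + \<alpha> *\<^sub>R v)}"

definition prox_regular :: "real \<Rightarrow> 'a::euclidean_space set \<Rightarrow> bool" where
  "prox_regular \<eta> S \<longleftrightarrow>
     (\<forall>x \<in> frontier S. \<forall>v \<in> proximal_normal_cone S x.
        norm v = 1 \<longrightarrow> ball (x + \<eta> *\<^sub>R v) \<eta> \<inter> S = {})"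

definition clarke_tangent_cone :: "'a::euclidean_space set \<Rightarrow> 'a \<Rightarrow> 'a set" where
  "clarke_tangent_cone \<Omega> x = {v. \<forall>(t::nat \<Rightarrow> real) (xs::nat \<Rightarrow> 'a).
      (\<forall>n. t n > 0) \<and> decseq t \<and> t \<longlonglongrightarrow> 0 \<and>
      (\<forall>n. xs n \<in> \<Omega>) \<and> xs \<longlonglongrightarrow> x \<longrightarrow>
      (\<exists>vs. vs \<longlonglongrightarrow> v \<and> (\<forall>n. xs n + t n *\<^sub>R vs n \<in> \<Omega>))}"

text \<open>P_x(v): the unique nearest point of the Clarke tangent cone T(Omega,x) to v.\<close>
definition tangent_proj :: "'a::euclidean_space set \<Rightarrow> 'a \<Rightarrow> 'a \<Rightarrow> 'a" where
  "tangent_proj \<Omega> x v = (THE p. p \<in> nearest_points (clarke_tangent_cone \<Omega> x) v)"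

definition lsc_on :: "'b::topological_space set \<Rightarrow> ('b \<Rightarrow> real) \<Rightarrow> bool" where
  "lsc_on S f \<longleftrightarrow> (\<forall>z \<in> S. \<forall>a. a < f z \<longrightarrow> (\<forall>\<^sub>F y in at z within S. a < f y))"

end

theory Submission
  imports Defs
begin

definition NC :: "'a::euclidean_space set \<Rightarrow> real \<Rightarrow> 'a \<Rightarrow> 'a set" where
  "NC \<Omega> \<eta> x = {\<zeta>. \<forall>y\<in>\<Omega>. 2*\<eta>*(\<zeta> \<bullet> (y - x)) \<le> norm \<zeta> * (norm (y - x))\<^sup>2}"

lemma nd: "(norm (a - b))\<^sup>2 = (norm a)\<^sup>2 - 2*(a \<bullet> b) + (norm b)\<^sup>2" for a b :: "'a::real_inner"
  by (simp add: power2_norm_eq_inner inner_diff inner_commute)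

lemma freq_subseq:
  fixes w :: "nat \<Rightarrow> 'a::euclidean_space"
  assumes "\<exists>\<^sub>F n in sequentially. P n" "\<And>n. norm (w n) \<le> B"
  obtains r l where "strict_mono r" "\<And>n. P (r n)" "(w \<circ> r) \<longlonglongrightarrow> l"
proof -
  have "infinite {n. P n}" using assms(1) frequently_cofinite cofinite_eq_sequentially by metis
  then obtain r1 :: "nat \<Rightarrow> nat" where r1: "strict_mono r1" "\<And>n. r1 n \<in> {n. P n}"
    using infinite_enumerate by blast
  have "seq_compact (cball (0::'a) B)" by (simp add: compact_imp_seq_compact)
  moreover have "\<forall>n. (w \<circ> r1) n \<in> cball 0 B" using assms(2) by simp
  ultimately obtain l r2 where "strict_mono (r2::nat\<Rightarrow>nat)" "((w \<circ> r1) \<circ> r2) \<longlonglongrightarrow> l"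
    by (rule seq_compactE)
  then show ?thesis using r1
    by (intro that[of "r1 \<circ> r2" l]) (auto simp: strict_mono_o o_assoc)
qed

context
  fixes \<Omega> :: "'a::euclidean_space set" and \<eta> :: real
  assumes cl: "closed \<Omega>" and eta: "\<eta> > 0" and pr: "prox_regular \<eta> \<Omega>"
begin

lemma key:
  assumes x: "x \<in> \<Omega>" and s: "\<sigma> > 0" and h: "\<forall>y\<in>\<Omega>. \<zeta> \<bullet> (y - x) \<le> \<sigma> * (norm (y - x))\<^sup>2"
  shows "\<zeta> \<in> NC \<Omega> \<eta> x"
proof (cases "\<zeta> = 0")
  case True then show ?thesis by (simp add: NC_def)
next
  case False
  define \<alpha> where "\<alpha> = 1 / (2*\<sigma>)"
  have a: "\<alpha> > 0" "2*\<alpha>*\<sigma> = 1" using s by (auto simp: \<alpha>_def)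
  have near: "dist (x + \<alpha> *\<^sub>R \<zeta>) x \<le> dist (x + \<alpha> *\<^sub>R \<zeta>) y" if "y \<in> \<Omega>" for y
  proof -
    have e: "(dist (x + \<alpha> *\<^sub>R \<zeta>) y)\<^sup>2 = (norm (y - x))\<^sup>2 - 2*\<alpha>*(\<zeta> \<bullet> (y - x)) + \<alpha>\<^sup>2 * (norm \<zeta>)\<^sup>2"
    proof -
      have "dist (x + \<alpha> *\<^sub>R \<zeta>) y = norm ((y - x) - \<alpha> *\<^sub>R \<zeta>)"
        by (simp add: dist_norm norm_minus_commute algebra_simps)
      then show ?thesis by (simp add: nd power_mult_distrib inner_commute)
    qed
    have "2*\<alpha>*(\<zeta> \<bullet> (y - x)) \<le> 2*\<alpha>*(\<sigma> * (norm (y - x))\<^sup>2)"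
      using h that a by (intro mult_left_mono) auto
    also have "\<dots> = (norm (y - x))\<^sup>2" using a by (simp add: algebra_simps)
    finally have "(dist (x + \<alpha> *\<^sub>R \<zeta>) x)\<^sup>2 \<le> (dist (x + \<alpha> *\<^sub>R \<zeta>) y)\<^sup>2"
      using e a by (simp add: dist_norm power_mult_distrib)
    then show ?thesis by (simp add: power2_le_iff_abs_le)
  qed
  have nz: "norm \<zeta> > 0" using False by simp
  have fr: "x \<in> frontier \<Omega>"
  proof -
    have "x \<notin> interior \<Omega>"
    proof
      assume "x \<in> interior \<Omega>"
      then obtain e where e: "e > 0" "ball x e \<subseteq> \<Omega>" by (meson mem_interior)
      define s where "s = min \<alpha> (e / (2 * norm \<zeta>))"
      have s0: "s > 0" "s \<le> \<alpha>" "s * norm \<zeta> < e" using a e nz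
        by (auto simp: s_def min_def field_simps)
      have "x + s *\<^sub>R \<zeta> \<in> ball x e" using s0 by (simp add: dist_norm)
      then have "x + s *\<^sub>R \<zeta> \<in> \<Omega>" using e by blast
      from near[OF this] have "\<alpha> * norm \<zeta> \<le> norm ((\<alpha> - s) *\<^sub>R \<zeta>)"
        using a by (simp add: dist_norm algebra_simps)
      also have "\<dots> = (\<alpha> - s) * norm \<zeta>" using s0 by simp
      moreover have "s * norm \<zeta> > 0" using s0 nz by simp
      ultimately show False by (simp add: left_diff_distrib)
    qed
    then show ?thesis using x by (simp add: frontier_def closure_subset[THEN subsetD])
  qed
  define u where "u = (1 / norm \<zeta>) *\<^sub>R \<zeta>"
  have un: "norm u = 1" using nz by (simp add: u_def)
  have "x + (\<alpha> * norm \<zeta>) *\<^sub>R u = x + \<alpha> *\<^sub>R \<zeta>" using nz by (simp add: u_def)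
  then have "u \<in> proximal_normal_cone \<Omega> x"
    unfolding proximal_normal_cone_def nearest_points_def
    using a nz x near by (intro CollectI exI[of _ "\<alpha> * norm \<zeta>"]) auto
  then have ball: "ball (x + \<eta> *\<^sub>R u) \<eta> \<inter> \<Omega> = {}"
    using pr fr un unfolding prox_regular_def by blast
  show ?thesis unfolding NC_def
  proof safe
    fix y assume y: "y \<in> \<Omega>"
    then have "\<eta> \<le> dist (x + \<eta> *\<^sub>R u) y" using ball by (metis disjoint_iff mem_ball not_less)
    then have "\<eta>\<^sup>2 \<le> (dist (x + \<eta> *\<^sub>R u) y)\<^sup>2" using eta by (simp add: power_mono)
    also have "\<dots> = (norm (y - x))\<^sup>2 - 2*\<eta>*(u \<bullet> (y - x)) + \<eta>\<^sup>2"
    proof -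
      have "dist (x + \<eta> *\<^sub>R u) y = norm ((y - x) - \<eta> *\<^sub>R u)"
        by (simp add: dist_norm norm_minus_commute algebra_simps)
      then show ?thesis using un by (simp add: nd power_mult_distrib inner_commute)
    qed
    finally have "2*\<eta>*(u \<bullet> (y - x)) \<le> (norm (y - x))\<^sup>2" by simp
    then have "norm \<zeta> * (2*\<eta>*(u \<bullet> (y - x))) \<le> norm \<zeta> * (norm (y - x))\<^sup>2"
      using nz by (intro mult_left_mono) auto
    moreover have "norm \<zeta> * (2*\<eta>*(u \<bullet> (y - x))) = 2*\<eta>*(\<zeta> \<bullet> (y - x))"
      using nz by (simp add: u_def)
    ultimately show "2*\<eta>*(\<zeta> \<bullet> (y - x)) \<le> norm \<zeta> * (norm (y - x))\<^sup>2" by simp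
  qed
qed

lemma NC_zero: "0 \<in> NC \<Omega> \<eta> x" by (simp add: NC_def)

lemma NC_scale:
  assumes "\<zeta> \<in> NC \<Omega> \<eta> x" "c \<ge> 0"
  shows "c *\<^sub>R \<zeta> \<in> NC \<Omega> \<eta> x"
  unfolding NC_def
proof safe
  fix y assume "y \<in> \<Omega>"
  then have "2*\<eta>*(\<zeta> \<bullet> (y - x)) \<le> norm \<zeta> * (norm (y - x))\<^sup>2" using assms(1) by (simp add: NC_def)
  then have "c * (2*\<eta>*(\<zeta> \<bullet> (y - x))) \<le> c * (norm \<zeta> * (norm (y - x))\<^sup>2)"
    using assms(2) by (rule mult_left_mono)
  then show "2*\<eta>*((c *\<^sub>R \<zeta>) \<bullet> (y - x)) \<le> norm (c *\<^sub>R \<zeta>) * (norm (y - x))\<^sup>2"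
    using assms(2) by (simp add: algebra_simps)
qed

lemma NC_add:
  assumes x: "x \<in> \<Omega>" and a: "\<zeta>1 \<in> NC \<Omega> \<eta> x" "\<zeta>2 \<in> NC \<Omega> \<eta> x"
  shows "\<zeta>1 + \<zeta>2 \<in> NC \<Omega> \<eta> x"
proof (rule key[OF x, of "(norm \<zeta>1 + norm \<zeta>2) / (2*\<eta>) + 1"])
  have "0 \<le> (norm \<zeta>1 + norm \<zeta>2) / (2*\<eta>)" using eta by simp
  then show "0 < (norm \<zeta>1 + norm \<zeta>2) / (2*\<eta>) + 1" by linarith
  show "\<forall>y\<in>\<Omega>. (\<zeta>1 + \<zeta>2) \<bullet> (y - x) \<le> ((norm \<zeta>1 + norm \<zeta>2) / (2*\<eta>) + 1) * (norm (y - x))\<^sup>2"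
  proof
    fix y assume "y \<in> \<Omega>"
    then have h: "2*\<eta>*(\<zeta>1 \<bullet> (y - x)) \<le> norm \<zeta>1 * (norm (y - x))\<^sup>2"
      "2*\<eta>*(\<zeta>2 \<bullet> (y - x)) \<le> norm \<zeta>2 * (norm (y - x))\<^sup>2" using a by (auto simp: NC_def)
    have "(\<zeta>1 + \<zeta>2) \<bullet> (y - x) \<le> (norm \<zeta>1 + norm \<zeta>2) / (2*\<eta>) * (norm (y - x))\<^sup>2"
      using h eta by (simp add: field_simps inner_add_left)
    also have "\<dots> \<le> ((norm \<zeta>1 + norm \<zeta>2) / (2*\<eta>) + 1) * (norm (y - x))\<^sup>2"
      by (simp add: algebra_simps)
    finally show "(\<zeta>1 + \<zeta>2) \<bullet> (y - x) \<le> ((norm \<zeta>1 + norm \<zeta>2) / (2*\<eta>) + 1) * (norm (y - x))\<^sup>2" .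
  qed
qed

lemma NC_convex: "x \<in> \<Omega> \<Longrightarrow> convex (NC \<Omega> \<eta> x)"
  unfolding convex_def using NC_add NC_scale by blast

lemma NC_graph:
  assumes "xs \<longlonglongrightarrow> x" "zs \<longlonglongrightarrow> \<zeta>" "\<And>n. zs n \<in> NC \<Omega> \<eta> (xs n)"
  shows "\<zeta> \<in> NC \<Omega> \<eta> x"
  unfolding NC_def
proof safe
  fix y assume y: "y \<in> \<Omega>"
  show "2*\<eta>*(\<zeta> \<bullet> (y - x)) \<le> norm \<zeta> * (norm (y - x))\<^sup>2"
  proof (rule LIMSEQ_le)
    show "(\<lambda>n. 2*\<eta>*(zs n \<bullet> (y - xs n))) \<longlonglongrightarrow> 2*\<eta>*(\<zeta> \<bullet> (y - x))"
      using assms by (intro tendsto_intros)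
    show "(\<lambda>n. norm (zs n) * (norm (y - xs n))\<^sup>2) \<longlonglongrightarrow> norm \<zeta> * (norm (y - x))\<^sup>2"
      using assms by (intro tendsto_intros)
    show "\<exists>N. \<forall>n\<ge>N. 2*\<eta>*(zs n \<bullet> (y - xs n)) \<le> norm (zs n) * (norm (y - xs n))\<^sup>2"
      using assms(3) y by (auto simp: NC_def)
  qed
qed

lemma NC_closed: "closed (NC \<Omega> \<eta> x)"
  unfolding closed_sequential_limits
  using NC_graph[of "\<lambda>n. x" x] by (auto intro: tendsto_const)

lemma nearest_NC:
  assumes p: "p \<in> \<Omega>" and near: "\<forall>y\<in>\<Omega>. dist z p \<le> dist z y"
  shows "z - p \<in> NC \<Omega> \<eta> p"
proof (rule key[OF p, of 1])
  show "\<forall>y\<in>\<Omega>. (z - p) \<bullet> (y - p) \<le> 1 * (norm (y - p))\<^sup>2"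
  proof
    fix y assume "y \<in> \<Omega>"
    then have "(dist z p)\<^sup>2 \<le> (dist z y)\<^sup>2" using near by (simp add: power_mono)
    moreover have "dist z y = norm ((z - p) - (y - p))" by (simp add: dist_norm)
    moreover have "dist z p = norm (z - p)" by (simp add: dist_norm)
    ultimately have "(norm (z - p))\<^sup>2 \<le> (norm (z - p))\<^sup>2 - 2 * ((z - p) \<bullet> (y - p)) + (norm (y - p))\<^sup>2"
      by (simp only: nd)
    then show "(z - p) \<bullet> (y - p) \<le> 1 * (norm (y - p))\<^sup>2"
      by (smt (verit) zero_le_power2)
  qed
qed simp

lemma T_sub_polar:
  assumes x: "x \<in> \<Omega>" and k: "k \<in> clarke_tangent_cone \<Omega> x" and z: "\<zeta> \<in> NC \<Omega> \<eta> x"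
  shows "k \<bullet> \<zeta> \<le> 0"
proof -
  define t :: "nat \<Rightarrow> real" where "t = (\<lambda>n. inverse (real (Suc n)))"
  have tp: "\<And>n. t n > 0" by (simp add: t_def)
  have td: "decseq t" unfolding t_def decseq_def
    by (auto intro!: le_imp_inverse_le)
  have tl: "t \<longlonglongrightarrow> 0" unfolding t_def by (rule LIMSEQ_inverse_real_of_nat)
  from k have "\<exists>vs. vs \<longlonglongrightarrow> k \<and> (\<forall>n. x + t n *\<^sub>R vs n \<in> \<Omega>)"
    unfolding clarke_tangent_cone_def using tp td tl x by auto
  then obtain vs where vs: "vs \<longlonglongrightarrow> k" "\<And>n. x + t n *\<^sub>R vs n \<in> \<Omega>" by blast
  have ineq: "2*\<eta>*(\<zeta> \<bullet> vs n) \<le> norm \<zeta> * t n * (norm (vs n))\<^sup>2" for n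
  proof -
    have "2*\<eta>*(\<zeta> \<bullet> (t n *\<^sub>R vs n)) \<le> norm \<zeta> * (norm (t n *\<^sub>R vs n))\<^sup>2"
      using z vs(2)[of n] by (force simp: NC_def)
    then have "t n * (2*\<eta>*(\<zeta> \<bullet> vs n)) \<le> t n * (norm \<zeta> * t n * (norm (vs n))\<^sup>2)"
      using tp[of n] by (simp add: power_mult_distrib power2_eq_square algebra_simps)
    then show ?thesis using tp[of n] by simp
  qed
  have "2*\<eta>*(\<zeta> \<bullet> k) \<le> norm \<zeta> * 0 * (norm k)\<^sup>2"
  proof (rule LIMSEQ_le)
    show "(\<lambda>n. 2*\<eta>*(\<zeta> \<bullet> vs n)) \<longlonglongrightarrow> 2*\<eta>*(\<zeta> \<bullet> k)" using vs by (intro tendsto_intros)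
    show "(\<lambda>n. norm \<zeta> * t n * (norm (vs n))\<^sup>2) \<longlonglongrightarrow> norm \<zeta> * 0 * (norm k)\<^sup>2"
      using vs tl by (intro tendsto_intros)
  qed (use ineq in auto)
  then show ?thesis using eta by (simp add: inner_commute mult_le_0_iff)
qed

lemma polar_sub_T:
  assumes x: "x \<in> \<Omega>" and k: "\<forall>\<zeta>\<in>NC \<Omega> \<eta> x. k \<bullet> \<zeta> \<le> 0"
  shows "k \<in> clarke_tangent_cone \<Omega> x"
  unfolding clarke_tangent_cone_def
proof (intro CollectI allI impI)
  fix t :: "nat \<Rightarrow> real" and xs :: "nat \<Rightarrow> 'a"
  assume "(\<forall>n. 0 < t n) \<and> decseq t \<and> t \<longlonglongrightarrow> 0 \<and> (\<forall>n. xs n \<in> \<Omega>) \<and> xs \<longlonglongrightarrow> x"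
  then have tp: "\<And>n. t n > 0" and tl: "t \<longlonglongrightarrow> 0" and xsO: "\<And>n. xs n \<in> \<Omega>" and xl: "xs \<longlonglongrightarrow> x"
    by auto
  have ne: "\<Omega> \<noteq> {}" using x by auto
  have "\<forall>n. \<exists>p. p \<in> \<Omega> \<and> (\<forall>y\<in>\<Omega>. dist (xs n + t n *\<^sub>R k) p \<le> dist (xs n + t n *\<^sub>R k) y)"
    using distance_attains_inf[OF cl ne] by metis
  then obtain p where pO: "\<And>n. p n \<in> \<Omega>"
    and pn: "\<And>n. \<forall>y\<in>\<Omega>. dist (xs n + t n *\<^sub>R k) (p n) \<le> dist (xs n + t n *\<^sub>R k) y"
    by metis
  define \<zeta> where "\<zeta> n = xs n + t n *\<^sub>R k - p n" for n
  define w where "w n = (1 / t n) *\<^sub>R \<zeta> n" for n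
  have zN: "\<zeta> n \<in> NC \<Omega> \<eta> (p n)" for n unfolding \<zeta>_def using nearest_NC pO pn by blast
  have wN: "w n \<in> NC \<Omega> \<eta> (p n)" for n unfolding w_def using NC_scale zN tp
    by (simp add: less_imp_le)
  have zb: "norm (\<zeta> n) \<le> t n * norm k" for n
  proof -
    have "dist (xs n + t n *\<^sub>R k) (p n) \<le> dist (xs n + t n *\<^sub>R k) (xs n)" using pn xsO by blast
    then show ?thesis using tp[of n] by (simp add: \<zeta>_def dist_norm)
  qed
  have wb: "norm (w n) \<le> norm k" for n
    using zb[of n] tp[of n] by (simp add: w_def field_simps)
  have xp: "xs n - p n = \<zeta> n - t n *\<^sub>R k" for n by (simp add: \<zeta>_def)
  have xpb: "norm (xs n - p n) \<le> 2 * t n * norm k" for n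
  proof -
    have "norm (xs n - p n) \<le> norm (\<zeta> n) + norm (t n *\<^sub>R k)" unfolding xp by (rule norm_triangle_ineq4)
    then show ?thesis using zb[of n] tp[of n] by simp
  qed
  have pl: "p \<longlonglongrightarrow> x"
  proof -
    have "(\<lambda>n. xs n - p n) \<longlonglongrightarrow> 0"
    proof (rule tendsto_norm_zero_cancel, rule real_tendsto_sandwich)
      show "\<forall>\<^sub>F n in sequentially. 0 \<le> norm (xs n - p n)" by simp
      show "\<forall>\<^sub>F n in sequentially. norm (xs n - p n) \<le> 2 * t n * norm k" using xpb by simp
      show "(\<lambda>n. 0) \<longlonglongrightarrow> (0::real)" by simp
      show "(\<lambda>n. 2 * t n * norm k) \<longlonglongrightarrow> 0" using tendsto_mult[OF tendsto_mult[OF tendsto_const tl] tendsto_const, of 2 "norm k"] by simp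
    qed
    then have "(\<lambda>n. xs n - (xs n - p n)) \<longlonglongrightarrow> x - 0" using xl by (intro tendsto_intros)
    then show ?thesis by simp
  qed
  have ineq: "2*\<eta>*((norm (w n))\<^sup>2 - w n \<bullet> k) \<le> 4 * t n * norm (w n) * (norm k)\<^sup>2" for n
  proof -
    have "2*\<eta>*(\<zeta> n \<bullet> (xs n - p n)) \<le> norm (\<zeta> n) * (norm (xs n - p n))\<^sup>2"
      using zN[of n] xsO[of n] by (force simp: NC_def)
    also have "\<dots> \<le> norm (\<zeta> n) * (2 * t n * norm k)\<^sup>2"
      using xpb[of n] by (intro mult_left_mono power_mono) auto
    finally have h: "2*\<eta>*((norm (\<zeta> n))\<^sup>2 - t n * (\<zeta> n \<bullet> k)) \<le> norm (\<zeta> n) * (2 * t n * norm k)\<^sup>2"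
      unfolding xp by (simp add: inner_diff_right power2_norm_eq_inner)
    have e: "\<zeta> n = t n *\<^sub>R w n" using tp[of n] by (simp add: w_def)
    have "(t n)\<^sup>2 * (2*\<eta>*((norm (w n))\<^sup>2 - w n \<bullet> k)) \<le> (t n)\<^sup>2 * (4 * t n * norm (w n) * (norm k)\<^sup>2)"
      using h tp[of n] unfolding e by (simp add: power_mult_distrib power2_eq_square algebra_simps)
    then show ?thesis using tp[of n] by simp
  qed
  have wl: "w \<longlonglongrightarrow> 0"
  proof (rule ccontr)
    assume "\<not> w \<longlonglongrightarrow> 0"
    then obtain \<epsilon> where e: "\<epsilon> > 0" "\<exists>\<^sub>F n in sequentially. \<not> dist (w n) 0 < \<epsilon>"
    proof -
      have "\<not> (\<forall>e>0. \<forall>\<^sub>F n in sequentially. dist (w n) 0 < e)"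
        using \<open>\<not> w \<longlonglongrightarrow> 0\<close> tendsto_iff by metis
      then obtain \<epsilon> where "\<epsilon> > 0" "\<not> (\<forall>\<^sub>F n in sequentially. dist (w n) 0 < \<epsilon>)"
        by blast
      then show ?thesis using that by (simp add: not_eventually)
    qed
    obtain r l where r: "strict_mono r" "\<And>n. \<not> dist (w (r n)) 0 < \<epsilon>" and l: "(w \<circ> r) \<longlonglongrightarrow> l"
      using freq_subseq[where w=w and B="norm k", OF e(2) wb] by metis
    define W where "W = w \<circ> r"
    define T where "T = t \<circ> r"
    have Wl: "W \<longlonglongrightarrow> l" using l by (simp add: W_def)
    have Tl: "T \<longlonglongrightarrow> 0" unfolding T_def by (rule LIMSEQ_subseq_LIMSEQ[OF tl r(1)])
    have Wb: "\<epsilon> \<le> norm (W n)" for n using r(2)[of n] by (simp add: W_def not_less)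
    have "\<epsilon> \<le> norm l"
    proof (rule LIMSEQ_le_const)
      show "(\<lambda>n. norm (W n)) \<longlonglongrightarrow> norm l" by (rule tendsto_norm[OF Wl])
      show "\<exists>N. \<forall>n\<ge>N. \<epsilon> \<le> norm (W n)" using Wb by blast
    qed
    have "l \<in> NC \<Omega> \<eta> x"
    proof (rule NC_graph)
      show "(p \<circ> r) \<longlonglongrightarrow> x" by (rule LIMSEQ_subseq_LIMSEQ[OF pl r(1)])
      show "W \<longlonglongrightarrow> l" by (rule Wl)
      show "W n \<in> NC \<Omega> \<eta> ((p \<circ> r) n)" for n using wN[of "r n"] by (simp add: W_def)
    qed
    then have lk: "k \<bullet> l \<le> 0" using k by blast
    have ineqW: "2*\<eta>*((norm (W n))\<^sup>2 - W n \<bullet> k) \<le> 4 * T n * norm (W n) * (norm k)\<^sup>2" for n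
      using ineq[of "r n"] by (simp add: W_def T_def)
    have "2*\<eta>*((norm l)\<^sup>2 - l \<bullet> k) \<le> 4 * 0 * norm l * (norm k)\<^sup>2"
    proof (rule LIMSEQ_le)
      show "(\<lambda>n. 2*\<eta>*((norm (W n))\<^sup>2 - W n \<bullet> k)) \<longlonglongrightarrow> 2*\<eta>*((norm l)\<^sup>2 - l \<bullet> k)"
        by (intro tendsto_mult tendsto_diff tendsto_power tendsto_norm tendsto_inner Wl tendsto_const)
      show "(\<lambda>n. 4 * T n * norm (W n) * (norm k)\<^sup>2) \<longlonglongrightarrow> 4 * 0 * norm l * (norm k)\<^sup>2"
        by (intro tendsto_mult tendsto_norm Wl Tl tendsto_const)
      show "\<exists>N. \<forall>n\<ge>N. 2*\<eta>*((norm (W n))\<^sup>2 - W n \<bullet> k) \<le> 4 * T n * norm (W n) * (norm k)\<^sup>2"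
        using ineqW by blast
    qed
    then have "(norm l)\<^sup>2 \<le> l \<bullet> k" using eta by (simp add: mult_le_0_iff)
    with lk inner_commute[of l k] have "(norm l)\<^sup>2 \<le> 0" by linarith
    then have "l = 0" by simp
    with \<open>\<epsilon> \<le> norm l\<close> e(1) show False by simp
  qed
  show "\<exists>vs. vs \<longlonglongrightarrow> k \<and> (\<forall>n. xs n + t n *\<^sub>R vs n \<in> \<Omega>)"
  proof (intro exI conjI allI)
    show "(\<lambda>n. k - w n) \<longlonglongrightarrow> k" using wl tendsto_diff[OF tendsto_const wl, of k] by simp
    fix n
    have "xs n + t n *\<^sub>R (k - w n) = p n" using tp[of n] by (simp add: w_def \<zeta>_def algebra_simps)
    then show "xs n + t n *\<^sub>R (k - w n) \<in> \<Omega>" using pO by simp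
  qed
qed

lemma proj_eq:
  assumes x: "x \<in> \<Omega>"
  shows "tangent_proj \<Omega> x v = v - closest_point (NC \<Omega> \<eta> x) v"
proof -
  let ?N = "NC \<Omega> \<eta> x"
  let ?T = "clarke_tangent_cone \<Omega> x"
  define q where "q = closest_point ?N v"
  define r where "r = v - q"
  have cN: "closed ?N" "convex ?N" "?N \<noteq> {}" using NC_closed NC_convex[OF x] NC_zero by auto
  have qN: "q \<in> ?N" unfolding q_def using closest_point_in_set cN by blast
  have dot: "(v - q) \<bullet> (y - q) \<le> 0" if "y \<in> ?N" for y
    unfolding q_def using closest_point_dot[OF cN(2,1) that] .
  have "(v - q) \<bullet> (0 - q) \<le> 0" using dot NC_zero by blast
  moreover have "(v - q) \<bullet> (2 *\<^sub>R q - q) \<le> 0" using dot NC_scale[OF qN, of 2] by simp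
  moreover have "2 *\<^sub>R q - q = q" by (simp add: scaleR_2)
  ultimately have qr: "q \<bullet> r = 0" unfolding r_def by (simp add: inner_commute)
  have Tchar: "t \<in> ?T \<longleftrightarrow> (\<forall>\<zeta>\<in>?N. t \<bullet> \<zeta> \<le> 0)" for t
    using T_sub_polar[OF x] polar_sub_T[OF x] by blast
  have rT: "r \<in> ?T" unfolding Tchar
  proof
    fix \<zeta> assume "\<zeta> \<in> ?N"
    then have "q + \<zeta> \<in> ?N" using NC_add[OF x qN] by blast
    from dot[OF this] show "r \<bullet> \<zeta> \<le> 0" by (simp add: r_def)
  qed
  have bound: "(norm q)\<^sup>2 + (norm (r - t))\<^sup>2 \<le> (dist v t)\<^sup>2" if "t \<in> ?T" for t
  proof -
    have tq: "t \<bullet> q \<le> 0" using that qN Tchar by blast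
    have "dist v t = norm (q - (t - r))" by (simp add: dist_norm r_def algebra_simps)
    then have "(dist v t)\<^sup>2 = (norm q)\<^sup>2 - 2 * (q \<bullet> (t - r)) + (norm (t - r))\<^sup>2" by (simp add: nd)
    moreover have "q \<bullet> (t - r) = t \<bullet> q - q \<bullet> r" by (simp add: inner_diff_right inner_commute)
    moreover have "norm (t - r) = norm (r - t)" by (rule norm_minus_commute)
    ultimately show ?thesis using tq qr by simp
  qed
  have dr: "dist v r = norm q" by (simp add: r_def dist_norm)
  have rnear: "r \<in> nearest_points ?T v"
    unfolding nearest_points_def
  proof (intro CollectI conjI ballI rT)
    fix t assume "t \<in> ?T"
    from bound[OF this] have "(dist v r)\<^sup>2 \<le> (dist v t)\<^sup>2" unfolding dr
      using zero_le_power2[of "norm (r - t)"] by linarith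
    then show "dist v r \<le> dist v t" by (simp add: power2_le_iff_abs_le)
  qed
  have "(THE p. p \<in> nearest_points ?T v) = r"
  proof (rule the_equality)
    show "r \<in> nearest_points ?T v" by (rule rnear)
    fix p assume p: "p \<in> nearest_points ?T v"
    then have pT: "p \<in> ?T" and "dist v p \<le> dist v r" using rT by (auto simp: nearest_points_def)
    then have "(dist v p)\<^sup>2 \<le> (norm q)\<^sup>2" unfolding dr by (simp add: power_mono)
    with bound[OF pT] have "(norm (r - p))\<^sup>2 \<le> 0" by linarith
    then show "p = r" by simp
  qed
  then show ?thesis by (simp add: tangent_proj_def r_def q_def)
qed

lemma f_eq:
  assumes x: "x \<in> \<Omega>"
  shows "(norm (tangent_proj \<Omega> x v))\<^sup>2 = (dist v (closest_point (NC \<Omega> \<eta> x) v))\<^sup>2"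
  by (simp add: proj_eq[OF x] dist_norm)

end

theorem proposition2p2:
  fixes \<Omega> :: "'a::euclidean_space set" and \<eta> :: real
  assumes "closed \<Omega>" and "\<eta> > 0" and "prox_regular \<eta> \<Omega>"
  shows "lsc_on (\<Omega> \<times> UNIV) (\<lambda>(x, v). (norm (tangent_proj \<Omega> x v))\<^sup>2)
         \<and> (\<forall>x \<in> \<Omega>. convex_on UNIV (\<lambda>v. (norm (tangent_proj \<Omega> x v))\<^sup>2))"
proof -
  note f_eq' = f_eq[OF assms]
  note NC_graph' = NC_graph[OF assms]
  have conv: "convex_on UNIV (\<lambda>v. (norm (tangent_proj \<Omega> x v))\<^sup>2)" if x: "x \<in> \<Omega>" for x
  proof -
    let ?N = "NC \<Omega> \<eta> x"
    let ?P = "closest_point ?N"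
    have cN: "closed ?N" "convex ?N" "?N \<noteq> {}"
      using NC_closed[OF assms] NC_convex[OF assms x] NC_zero[OF assms] by auto
    have PN: "?P y \<in> ?N" for y using closest_point_in_set cN by blast
    have eq: "(\<lambda>v. (norm (tangent_proj \<Omega> x v))\<^sup>2) = (\<lambda>v. (dist v (?P v))\<^sup>2)"
      using f_eq'[OF x] by auto
    show ?thesis unfolding eq
    proof (rule convex_onI)
      fix t :: real and a b :: 'a
      assume t: "0 < t" "t < 1"
      define z where "z = (1 - t) *\<^sub>R a + t *\<^sub>R b"
      define n where "n = (1 - t) *\<^sub>R ?P a + t *\<^sub>R ?P b"
      define A where "A = dist a (?P a)"
      define B where "B = dist b (?P b)"
      have nN: "n \<in> ?N" unfolding n_def using convexD[OF cN(2) PN PN] t by simp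
      have "dist z (?P z) \<le> dist z n" using closest_point_le[OF cN(1) nN] .
      also have "dist z n = norm ((1 - t) *\<^sub>R (a - ?P a) + t *\<^sub>R (b - ?P b))"
        by (simp add: z_def n_def dist_norm algebra_simps)
      also have "\<dots> \<le> norm ((1 - t) *\<^sub>R (a - ?P a)) + norm (t *\<^sub>R (b - ?P b))"
        by (rule norm_triangle_ineq)
      also have "\<dots> = (1 - t) * A + t * B" using t by (simp add: A_def B_def dist_norm)
      finally have h: "dist z (?P z) \<le> (1 - t) * A + t * B" .
      have "(dist z (?P z))\<^sup>2 \<le> ((1 - t) * A + t * B)\<^sup>2"
        using h by (intro power_mono) auto
      also have "\<dots> = (1 - t) * A\<^sup>2 + t * B\<^sup>2 - (1 - t) * t * (A - B)\<^sup>2"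
        by (simp add: power2_eq_square algebra_simps)
      also have "\<dots> \<le> (1 - t) * A\<^sup>2 + t * B\<^sup>2" using t by simp
      finally show "(dist ((1 - t) *\<^sub>R a + t *\<^sub>R b) (?P ((1 - t) *\<^sub>R a + t *\<^sub>R b)))\<^sup>2
          \<le> (1 - t) * (dist a (?P a))\<^sup>2 + t * (dist b (?P b))\<^sup>2"
        by (simp add: z_def A_def B_def)
    qed simp
  qed
  have lsc: "lsc_on (\<Omega> \<times> UNIV) (\<lambda>(x, v). (norm (tangent_proj \<Omega> x v))\<^sup>2)"
    unfolding lsc_on_def
  proof (intro ballI allI impI)
    fix z :: "'a \<times> 'a" and a :: real
    assume zS: "z \<in> \<Omega> \<times> UNIV" and az: "a < (case z of (x, v) \<Rightarrow> (norm (tangent_proj \<Omega> x v))\<^sup>2)"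
    obtain x v where z: "z = (x, v)" by (cases z)
    have x: "x \<in> \<Omega>" using zS z by auto
    let ?f = "\<lambda>(x, v). (norm (tangent_proj \<Omega> x v))\<^sup>2"
    show "\<forall>\<^sub>F y in at z within \<Omega> \<times> UNIV. a < ?f y"
    proof (rule sequentially_imp_eventually_within, intro allI impI)
      fix Y :: "nat \<Rightarrow> 'a \<times> 'a"
      assume "(\<forall>n. Y n \<in> \<Omega> \<times> UNIV \<and> Y n \<noteq> z) \<and> Y \<longlonglongrightarrow> z"
      then have YS: "\<And>n. Y n \<in> \<Omega> \<times> UNIV" and Yl: "Y \<longlonglongrightarrow> z" by auto
      define xs where "xs n = fst (Y n)" for n
      define vs where "vs n = snd (Y n)" for n
      define Q where "Q n = closest_point (NC \<Omega> \<eta> (xs n)) (vs n)" for n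
      have xsO: "xs n \<in> \<Omega>" for n using YS[of n] by (auto simp: xs_def mem_Times_iff)
      have xl: "xs \<longlonglongrightarrow> x" unfolding xs_def using tendsto_fst[OF Yl] z by simp
      have vl: "vs \<longlonglongrightarrow> v" unfolding vs_def using tendsto_snd[OF Yl] z by simp
      have fY: "?f (Y n) = (dist (vs n) (Q n))\<^sup>2" for n
        using f_eq'[OF xsO[of n], of "vs n"] by (simp add: case_prod_beta xs_def vs_def Q_def)
      have fz: "?f z = (dist v (closest_point (NC \<Omega> \<eta> x) v))\<^sup>2"
        using f_eq'[OF x] z by simp
      show "\<forall>\<^sub>F n in sequentially. a < ?f (Y n)"
      proof (rule ccontr)
        assume "\<not> (\<forall>\<^sub>F n in sequentially. a < ?f (Y n))"
        then have fr: "\<exists>\<^sub>F n in sequentially. \<not> a < ?f (Y n)" by (simp add: not_eventually)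
        obtain K where K: "K > 0" "\<And>n. norm (vs n) \<le> K"
          using BseqE[OF convergent_imp_Bseq[OF convergentI[OF vl]]] by metis
        have Qb: "norm (Q n) \<le> 2 * K" for n
        proof -
          have "dist (vs n) (Q n) \<le> dist (vs n) 0"
            unfolding Q_def by (rule closest_point_le[OF NC_closed[OF assms] NC_zero[OF assms]])
          then have "norm (vs n - Q n) \<le> norm (vs n)" by (simp add: dist_norm)
          moreover have "norm (Q n) \<le> norm (vs n) + norm (vs n - Q n)"
            using norm_triangle_ineq4[of "vs n" "vs n - Q n"] by simp
          ultimately show ?thesis using K(2)[of n] by linarith
        qed
        obtain r l where r: "strict_mono r" "\<And>n. \<not> a < ?f (Y (r n))" and l: "(Q \<circ> r) \<longlonglongrightarrow> l"
          using freq_subseq[where w=Q and B="2*K", OF fr Qb] by metis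
        have lN: "l \<in> NC \<Omega> \<eta> x"
        proof (rule NC_graph')
          show "(xs \<circ> r) \<longlonglongrightarrow> x" by (rule LIMSEQ_subseq_LIMSEQ[OF xl r(1)])
          show "(Q \<circ> r) \<longlonglongrightarrow> l" by (rule l)
          show "(Q \<circ> r) n \<in> NC \<Omega> \<eta> ((xs \<circ> r) n)" for n
            unfolding Q_def o_def by (rule closest_point_in_set[OF NC_closed[OF assms]]) (use NC_zero[OF assms] in blast)
        qed
        have "(dist v (closest_point (NC \<Omega> \<eta> x) v))\<^sup>2 \<le> (dist v l)\<^sup>2"
          using closest_point_le[OF NC_closed[OF assms] lN, of v] by (simp add: power_mono)
        also have "(dist v l)\<^sup>2 \<le> a"
        proof (rule LIMSEQ_le_const2)
          have vr: "(vs \<circ> r) \<longlonglongrightarrow> v" by (rule LIMSEQ_subseq_LIMSEQ[OF vl r(1)])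
          show "(\<lambda>n. (dist ((vs \<circ> r) n) ((Q \<circ> r) n))\<^sup>2) \<longlonglongrightarrow> (dist v l)\<^sup>2"
            by (intro tendsto_power tendsto_dist vr l)
          show "\<exists>N. \<forall>n\<ge>N. (dist ((vs \<circ> r) n) ((Q \<circ> r) n))\<^sup>2 \<le> a"
            using r(2) fY by (auto simp: not_less)
        qed
        finally show False using az fz z by simp
      qed
    qed
  qed
  show ?thesis using lsc conv by blast
qed

end
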